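(* Let $n \ge 1$ be an integer, let $X_1,\dots,X_n$ be i.i.d. Bernoulli random variables with $\Pr\{X_i=1\}=p\in(0,1)$, and let $K=\sum_{i=1}^n X_i$. For $\delta\in(0,1)$ define \[ L_{n,\delta} = \frac{K}{n} + \frac{3}{4}\,\frac{1-\frac{2K}{n}-\sqrt{1+\frac{9}{2\ln\frac{2}{\delta}}\,K\left(1-\frac{K}{n}\right)}}{1+\frac{9n}{8\ln\frac{2}{\delta}}},\qquad U_{n,\delta} = \frac{K}{n} + \frac{3}{4}\,\frac{1-\frac{2K}{n}+\sqrt{1+\frac{9}{2\ln\frac{2}{\delta}}\,K\left(1-\frac{K}{n}\right)}}{1+\frac{9n}{8\ln\frac{2}{\delta}}}. \] Then for any fixed $n$ and $p\in(0,1)$, the coverage probability of the confidence interval $[L_{n,\delta},U_{n,\delta}]$, i.e. $\Pr\{L_{n,\delta}\le p\le U_{n,\delta}\mid p\}$, decreases as $\delta$ increases.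
   Context: $\Pr\{\cdot\mid p\}$ denotes probability when the Bernoulli parameter equals $p$, so that $K$ is binomially distributed with parameters $n$ and $p$. *)

theory Defs
  imports "HOL-Probability.Probability"
begin

definition L_bound :: "nat \<Rightarrow> real \<Rightarrow> nat \<Rightarrow> real" where
  "L_bound n \<delta> k = real k / real n + 3/4 *
     ((1 - 2 * real k / real n
        - sqrt (1 + 9 / (2 * ln (2 / \<delta>)) * real k * (1 - real k / real n)))
      / (1 + 9 * real n / (8 * ln (2 / \<delta>))))"

definition U_bound :: "nat \<Rightarrow> real \<Rightarrow> nat \<Rightarrow> real" where
  "U_bound n \<delta> k = real k / real n + 3/4 *
     ((1 - 2 * real k / real n
        + sqrt (1 + 9 / (2 * ln (2 / \<delta>)) * real k * (1 - real k / real n)))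
      / (1 + 9 * real n / (8 * ln (2 / \<delta>))))"

definition coverage :: "nat \<Rightarrow> real \<Rightarrow> real \<Rightarrow> real" where
  "coverage n p \<delta> = measure_pmf.prob (binomial_pmf n p)
     {k. L_bound n \<delta> k \<le> p \<and> p \<le> U_bound n \<delta> k}"

end

theory Submission
  imports Defs
begin

lemma quad_between:
  fixes A B C y :: real
  assumes A: "A > 0" and D: "B^2 - 4*A*C \<ge> 0"
  shows "((-B - sqrt (B^2 - 4*A*C))/(2*A) \<le> y \<and> y \<le> (-B + sqrt (B^2 - 4*A*C))/(2*A))
         \<longleftrightarrow> A*y^2 + B*y + C \<le> 0"
proof -
  define s where "s = sqrt (B^2 - 4*A*C)"
  have s0: "s \<ge> 0" unfolding s_def using D by simp
  have ss: "s^2 = B^2 - 4*A*C" unfolding s_def using D real_sqrt_pow2 by blast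
  define r1 where "r1 = (-B - s)/(2*A)"
  define r2 where "r2 = (-B + s)/(2*A)"
  have r12: "r1 \<le> r2" unfolding r1_def r2_def using A s0 by (simp add: divide_right_mono)
  have fac: "A*y^2 + B*y + C = A*((y - r1)*(y - r2))"
    unfolding r1_def r2_def using A ss
    by (simp add: field_simps power2_eq_square) (metis distrib_left)
  have "(r1 \<le> y \<and> y \<le> r2) \<longleftrightarrow> (y - r1)*(y - r2) \<le> 0"
    using r12 by (auto simp: mult_le_0_iff)
  also have "\<dots> \<longleftrightarrow> A*((y - r1)*(y - r2)) \<le> 0"
    using A by (simp add: mult_le_0_iff)
  finally show ?thesis using fac unfolding r1_def r2_def s_def by simp
qed

lemma member_iff:
  fixes n k :: nat and p \<delta> :: real
  assumes n: "n \<ge> 1" and k: "k \<le> n" and d0: "0 < \<delta>" and d1: "\<delta> < 1"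
  shows "(L_bound n \<delta> k \<le> p \<and> p \<le> U_bound n \<delta> k) \<longleftrightarrow>
    (1 + 9 * real n / (8 * ln (2 / \<delta>))) * (p - real k / real n)^2
      + (-(3/2) * (1 - 2 * real k / real n)) * (p - real k / real n)
      + (-(9/4) * (real k / real n) * (1 - real k / real n)) \<le> 0"
proof -
  define c where "c = ln (2/\<delta>)"
  have "2/\<delta> > 1" using d0 d1 by (simp add: field_simps)
  hence c0: "c > 0" unfolding c_def using ln_gt_zero by blast
  define x where "x = real k / real n"
  have nr: "real n > 0" using n by simp
  have x0: "x \<ge> 0" and x1: "x \<le> 1" unfolding x_def using k nr by (auto simp: field_simps)
  define t where "t = 9 * real n / (8 * c)"
  have t0: "t > 0" unfolding t_def using c0 nr by simp
  have kx: "real k = x * real n" unfolding x_def using nr by simp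
  have inner: "1 + 9 / (2 * c) * real k * (1 - x) = 1 + 4*t*x*(1-x)"
    unfolding t_def kx using c0 nr by (simp add: field_simps)
  define A where "A = 1 + t"
  define B where "B = -(3/2) * (1 - 2*x)"
  define C where "C = -(9/4) * x * (1 - x)"
  have Dq: "B^2 - 4*A*C = 9/4 * (1 + 4*t*x*(1-x))"
    unfolding A_def B_def C_def by (simp add: power2_eq_square field_simps)
  have pos: "1 + 4*t*x*(1-x) \<ge> 0" using t0 x0 x1 by simp
  have sq: "sqrt (B^2 - 4*A*C) = 3/2 * sqrt (1 + 4*t*x*(1-x))"
  proof -
    have e: "sqrt (9/4::real) = 3/2" by (rule real_sqrt_unique) (auto simp: power2_eq_square)
    show ?thesis unfolding Dq real_sqrt_mult e by simp
  qed
  have A0: "A > 0" unfolding A_def using t0 by simp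
  have Dn: "B^2 - 4*A*C \<ge> 0" unfolding Dq using pos by simp
  have L1: "L_bound n \<delta> k = x + 3/4*((1-2*x - sqrt (1+4*t*x*(1-x)))/(1+t))"
  proof -
    have "L_bound n \<delta> k = x + 3/4*((1-2*x - sqrt (1 + 9 / (2 * c) * real k * (1 - x)))/(1 + 9 * real n / (8 * c)))"
      unfolding L_bound_def c_def x_def by simp
    then show ?thesis unfolding inner t_def by simp
  qed
  have L: "L_bound n \<delta> k = x + (-B - sqrt (B^2 - 4*A*C))/(2*A)"
    unfolding L1 sq unfolding A_def B_def using t0 by (simp add: field_simps)
  have U1: "U_bound n \<delta> k = x + 3/4*((1-2*x + sqrt (1+4*t*x*(1-x)))/(1+t))"
  proof -
    have "U_bound n \<delta> k = x + 3/4*((1-2*x + sqrt (1 + 9 / (2 * c) * real k * (1 - x)))/(1 + 9 * real n / (8 * c)))"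
      unfolding U_bound_def c_def x_def by simp
    then show ?thesis unfolding inner t_def by simp
  qed
  have U: "U_bound n \<delta> k = x + (-B + sqrt (B^2 - 4*A*C))/(2*A)"
    unfolding U1 sq unfolding A_def B_def using t0 by (simp add: field_simps)
  have "(L_bound n \<delta> k \<le> p \<and> p \<le> U_bound n \<delta> k) \<longleftrightarrow>
     ((-B - sqrt (B^2 - 4*A*C))/(2*A) \<le> p - x \<and> p - x \<le> (-B + sqrt (B^2 - 4*A*C))/(2*A))"
    unfolding L U by linarith
  also have "\<dots> \<longleftrightarrow> A*(p-x)^2 + B*(p-x) + C \<le> 0" by (rule quad_between[OF A0 Dn])
  finally show ?thesis unfolding A_def B_def C_def t_def c_def x_def by simp
qed

theorem theorem1:
  fixes n :: nat and p \<delta>1 \<delta>2 :: real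
  assumes "n \<ge> 1" and "0 < p" and "p < 1"
    and "0 < \<delta>1" and "\<delta>1 \<le> \<delta>2" and "\<delta>2 < 1"
  shows "coverage n p \<delta>2 \<le> coverage n p \<delta>1"
proof -
  define S where "S = (\<lambda>\<delta>. {k. L_bound n \<delta> k \<le> p \<and> p \<le> U_bound n \<delta> k})"
  have setp: "set_pmf (binomial_pmf n p) = {..n}"
    using assms by (simp add: set_pmf_binomial)
  have ln12: "ln (2/\<delta>2) \<le> ln (2/\<delta>1)"
    using assms by (simp add: frac_le)
  have lnpos: "ln (2/\<delta>2) > 0"
    using assms by (simp add: field_simps)
  have tmono: "9 * real n / (8 * ln (2 / \<delta>1)) \<le> 9 * real n / (8 * ln (2 / \<delta>2))"
    using ln12 lnpos by (intro divide_left_mono) auto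
  have sub: "S \<delta>2 \<inter> {..n} \<subseteq> S \<delta>1 \<inter> {..n}"
  proof
    fix k assume "k \<in> S \<delta>2 \<inter> {..n}"
    hence kn: "k \<le> n" and h: "L_bound n \<delta>2 k \<le> p \<and> p \<le> U_bound n \<delta>2 k"
      unfolding S_def by auto
    have d1: "\<delta>1 < 1" "0 < \<delta>2" using assms by auto
    show "k \<in> S \<delta>1 \<inter> {..n}"
      using member_iff[OF assms(1) kn d1(2) assms(6), of p] member_iff[OF assms(1) kn assms(4) d1(1), of p]
        h kn tmono mult_right_mono[OF tmono zero_le_power2[of "p - real k / real n"]]
      unfolding S_def by (auto simp: algebra_simps)
  qed
  have "coverage n p \<delta>2 = measure_pmf.prob (binomial_pmf n p) (S \<delta>2 \<inter> {..n})"
    unfolding coverage_def S_def setp[symmetric] by (simp add: measure_Int_set_pmf)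
  also have "\<dots> \<le> measure_pmf.prob (binomial_pmf n p) (S \<delta>1 \<inter> {..n})"
    using sub by (intro measure_pmf.finite_measure_mono) auto
  also have "\<dots> = coverage n p \<delta>1"
    unfolding coverage_def S_def setp[symmetric] by (simp add: measure_Int_set_pmf)
  finally show ?thesis .
qed

end
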